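(* Fix an ordinal $\beta\leq\omega_1$ and consider $\mathbb{S}(\beta)$, with $R_\alpha=\mathcal{O}^\alpha(\sim_e)$. For every $\alpha<\beta$, the restriction of $R_\alpha$ to $I\times(\alpha+1)$ (i.e. to pairs of points of $I\times(\alpha+1)$) is the identity relation, and $V\times\{\alpha\}\in\Sigma(R_\alpha)$, where $\Sigma=\mathcal{B}_V\otimes\mathcal{P}(\beta)$.
   Context: An LMP is $(S,\Sigma,\{\tau_a\}_{a\in L})$ with $L$ countable and Markov kernels $\tau_a$. $\Sigma(R)$ = $R$-closed members of $\Sigma$ ($x\in A$, $xRs\Rightarrow s\in A$); $\mathcal{R}(\Gamma)=\{(s,t):\forall A\in\Gamma\,(s\in A\iff t\in A)\}$; $\mathcal{R}^T(\Lambda)=\{(s,t):\forall a\,\forall E\in\Lambda\ \tau_a(s,E)=\tau_a(t,E)\}$; $\mathcal{O}(R)=\mathcal{R}^T(\Sigma(R))$, $\mathcal{O}^0(R)=R$, $\mathcal{O}^{\alpha+1}=\mathcal{O}\circ\mathcal{O}^\alpha$, $\mathcal{O}^\lambda(R)=\bigcap_{\alpha<\lambda}\mathcal{O}^\alpha(R)$. ${\sim_e}=\mathcal{R}(\sigma(\llbracket\mathcal{L}\rrbracket))$ where $\sigma(\llbracket\mathcal{L}\rrbracket)$ is generated by the denotations of formulas $\top\mid\phi\wedge\psi\mid\langle a\rangle_{>q}\phi$ ($q\in\mathbb{Q}\cap[0,1]$), $\llbracket\langle a\rangle_{>q}\phi\rrbracket=\{s:\tau_a(s,\llbracket\phi\rrbracket)>q\}$.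 The processes $\mathbb{S}(\beta)$: $I=(0,1)$, $\mathfrak{m}$ Lebesgue measure, $V\subseteq I$ Lebesgue nonmeasurable, $\mathcal{B}_V=\sigma(\mathcal{B}(I)\cup\{V\})$, and $\mathfrak{m}_0,\mathfrak{m}_1$ measures on $\mathcal{B}_V$ extending $\mathfrak{m}$ with $\mathfrak{m}_0(V)\neq\mathfrak{m}_1(V)$. Let $\{q_n\}_{n\in\omega}$ enumerate $\mathbb{Q}\cap I$. For ordinals $\eta$: $\alpha_n(0)=0$, $\alpha_n(\zeta+1)=\zeta$ for all $n$, and for limit $\lambda$, $(\alpha_n(\lambda))_{n\in\omega}$ is a fixed strictly increasing sequence of nonzero ordinals below $\lambda$ cofinal in $\lambda$. For an ordinal $\beta\leq\omega_1$, $\mathbb{S}(\beta)=(I\times\beta,\ \mathcal{B}_V\otimes\mathcal{P}(\beta),\ \{\tau_n\}_{n\in\omega})$ with $\tau_n((x,\eta),A)=x\cdot\mathfrak{m}_0(A_0)$ if $\eta=0$; $=\mathfrak{m}_0(A_{\alpha_n(\eta)})$ if $\eta>0$ and $x<q_n$; $=\mathfrak{m}_1(A_{\alpha_n(\eta)})$ if $\eta>0$ and $x\geq q_n$; here $A_\gamma=\{r:(r,\gamma)\in A\}$. These $\tau_n$ are Markov kernels, so $\mathbb{S}(\beta)$ is an LMP. *)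

theory Defs
  imports "HOL-Analysis.Analysis"
begin

text \<open>Ordinals are modelled as elements of a well-ordered type 'o; the ordinal
  beta is a downward closed set B of such elements.\<close>

definition Iunit :: "real set" where "Iunit = {0<..<1}"

definition BVsets :: "real set \<Rightarrow> real set set" where
  "BVsets V = sigma_sets Iunit (sets (restrict_space borel Iunit) \<union> {V})"

definition SigS :: "real set \<Rightarrow> 'o set \<Rightarrow> (real \<times> 'o) set set" where
  "SigS V B = sets (sigma Iunit (BVsets V) \<Otimes>\<^sub>M count_space B)"

definition ozero :: "'o::wellorder" where "ozero = (LEAST x. True)"

definition is_pred :: "'o::wellorder \<Rightarrow> 'o \<Rightarrow> bool" where
  "is_pred z a \<longleftrightarrow> z < a \<and> \<not> (\<exists>y. z < y \<and> y < a)"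

definition is_limit :: "'o::wellorder \<Rightarrow> bool" where
  "is_limit a \<longleftrightarrow> a \<noteq> ozero \<and> \<not> (\<exists>z. is_pred z a)"

definition sect :: "(real \<times> 'o) set \<Rightarrow> 'o \<Rightarrow> real set" where
  "sect A g = {r. (r, g) \<in> A}"

definition tauS :: "real measure \<Rightarrow> real measure \<Rightarrow> (nat \<Rightarrow> real) \<Rightarrow> (nat \<Rightarrow> 'o \<Rightarrow> 'o)
    \<Rightarrow> nat \<Rightarrow> real \<times> 'o::wellorder \<Rightarrow> (real \<times> 'o) set \<Rightarrow> real" where
  "tauS m0 m1 q al n s A = (case s of (x, eta) \<Rightarrow>
     if eta = ozero then x * measure m0 (sect A ozero)
     else if x < q n then measure m0 (sect A (al n eta))
     else measure m1 (sect A (al n eta)))"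

datatype form = FTop | FAnd form form | FDiam nat rat form

fun wf_form :: "form \<Rightarrow> bool" where
  "wf_form FTop = True"
| "wf_form (FAnd p r) = (wf_form p \<and> wf_form r)"
| "wf_form (FDiam a q p) = (0 \<le> q \<and> q \<le> 1 \<and> wf_form p)"

fun sem :: "(nat \<Rightarrow> 's \<Rightarrow> 's set \<Rightarrow> real) \<Rightarrow> 's set \<Rightarrow> form \<Rightarrow> 's set" where
  "sem t S FTop = S"
| "sem t S (FAnd p r) = sem t S p \<inter> sem t S r"
| "sem t S (FDiam a q p) = {s \<in> S. t a s (sem t S p) > real_of_rat q}"

definition RelG :: "'s set \<Rightarrow> 's set set \<Rightarrow> ('s \<times> 's) set" where
  "RelG S G = {(s, t). s \<in> S \<and> t \<in> S \<and> (\<forall>A\<in>G. s \<in> A \<longleftrightarrow> t \<in> A)}"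

definition RelT :: "'s set \<Rightarrow> (nat \<Rightarrow> 's \<Rightarrow> 's set \<Rightarrow> real) \<Rightarrow> 's set set \<Rightarrow> ('s \<times> 's) set" where
  "RelT S t L = {(s, u). s \<in> S \<and> u \<in> S \<and> (\<forall>a. \<forall>E\<in>L. t a s E = t a u E)}"

definition SigR :: "'s set set \<Rightarrow> ('s \<times> 's) set \<Rightarrow> 's set set" where
  "SigR Sig R = {A \<in> Sig. \<forall>x s. x \<in> A \<and> (x, s) \<in> R \<longrightarrow> s \<in> A}"

definition Oop :: "'s set \<Rightarrow> (nat \<Rightarrow> 's \<Rightarrow> 's set \<Rightarrow> real) \<Rightarrow> 's set set
    \<Rightarrow> ('s \<times> 's) set \<Rightarrow> ('s \<times> 's) set" where
  "Oop S t Sig R = RelT S t (SigR Sig R)"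

definition sim_e :: "'s set \<Rightarrow> (nat \<Rightarrow> 's \<Rightarrow> 's set \<Rightarrow> real) \<Rightarrow> ('s \<times> 's) set" where
  "sim_e S t = RelG S (sigma_sets S {sem t S p | p. wf_form p})"

definition Oiter :: "(('s \<times> 's) set \<Rightarrow> ('s \<times> 's) set) \<Rightarrow> ('s \<times> 's) set
    \<Rightarrow> 'o::wellorder \<Rightarrow> ('s \<times> 's) set" where
  "Oiter Of R0 = wfrec {(x, y). x < y} (\<lambda>f a.
     if a = ozero then R0
     else if (\<exists>z. is_pred z a) then Of (f (THE z. is_pred z a))
     else (\<Inter>z\<in>{z. z < a}. f z))"

end

theory Submission
  imports Defs
begin

lemma ozero_le: "ozero \<le> (x::'o::wellorder)"
  unfolding ozero_def by (rule Least_le) simp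

lemma pred_unique: "is_pred z a \<Longrightarrow> is_pred w a \<Longrightarrow> z = (w::'o::wellorder)"
  unfolding is_pred_def by (metis linorder_neqE)

lemma the_pred: "is_pred z a \<Longrightarrow> (THE z. is_pred z a) = (z::'o::wellorder)"
  using pred_unique by blast

lemma pred_le: "is_pred z a \<Longrightarrow> y < a \<Longrightarrow> y \<le> (z::'o::wellorder)"
  unfolding is_pred_def by (meson not_le)

lemma Oiter_unfold: "Oiter Of R0 (a::'o::wellorder) = (if a = ozero then R0 else if \<exists>z. is_pred z a then Of (Oiter Of R0 (THE z. is_pred z a)) else \<Inter>z\<in>{z. z<a}. Oiter Of R0 z)"
proof -
  have w: "wf {(x, y). x < (y::'o)}" by (rule wf)
  define H where "H = (\<lambda>f a. if a = ozero then R0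
     else if (\<exists>z. is_pred z a) then Of (f (THE z. is_pred z (a::'o)))
     else (\<Inter>z\<in>{z. z < a}. f z))"
  have e: "Oiter Of R0 = wfrec {(x, y). x < y} H" unfolding Oiter_def H_def ..
  have u: "wfrec {(x, y). x < y} H a = H (cut (wfrec {(x, y). x < y} H) {(x, y). x < y} a) a"
    by (rule wfrec[OF w])
  show ?thesis
  proof (cases "a = ozero")
    case True then show ?thesis unfolding e by (subst u) (simp add: H_def)
  next
    case F: False
    show ?thesis
    proof (cases "\<exists>z. is_pred z a")
      case True
      then obtain z where z: "is_pred z a" by blast
      then have "z < a" by (simp add: is_pred_def)
      then show ?thesis unfolding e using F True the_pred[OF z] by (subst u) (simp add: H_def cut_apply)
    next
      case False
      have "(\<Inter>y\<in>{y. y < a}. cut (wfrec {(x, y). x < y} H) {(x, y). x < y} a y) = (\<Inter>y\<in>{y. y < a}. wfrec {(x, y). x < y} H y)"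
        by (rule INF_cong) (simp_all add: cut_apply)
      then show ?thesis unfolding e using F False by (subst u) (simp add: H_def)
    qed
  qed
qed

locale ctx =
  fixes B :: "'o::wellorder set"
    and V :: "real set"
    and m0 m1 :: "real measure"
    and q :: "nat \<Rightarrow> real"
    and al :: "nat \<Rightarrow> 'o \<Rightarrow> 'o"
  assumes B_down: "\<And>x y. x \<in> B \<Longrightarrow> y \<le> x \<Longrightarrow> y \<in> B"
    and V_sub: "V \<subseteq> Iunit"
    and m0_space: "space m0 = Iunit" and m0_sets: "sets m0 = BVsets V"
    and m1_space: "space m1 = Iunit" and m1_sets: "sets m1 = BVsets V"
    and m0_ext: "\<And>A. A \<in> sets (restrict_space borel Iunit) \<Longrightarrow> emeasure m0 A = emeasure lborel A"
    and m1_ext: "\<And>A. A \<in> sets (restrict_space borel Iunit) \<Longrightarrow> emeasure m1 A = emeasure lborel A"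
    and m01_V: "emeasure m0 V \<noteq> emeasure m1 V"
    and q_enum: "bij_betw q UNIV (\<rat> \<inter> Iunit)"
    and al_zero: "\<And>n. al n ozero = ozero"
    and al_succ: "\<And>n z e. is_pred z e \<Longrightarrow> al n e = z"
    and al_lim_mono: "\<And>l. l \<in> B \<Longrightarrow> is_limit l \<Longrightarrow> strict_mono (\<lambda>n. al n l)"
    and al_lim_bound: "\<And>l n. l \<in> B \<Longrightarrow> is_limit l \<Longrightarrow> ozero < al n l \<and> al n l < l"
    and al_lim_cofinal: "\<And>l z. l \<in> B \<Longrightarrow> is_limit l \<Longrightarrow> z < l \<Longrightarrow> \<exists>n. z < al n l"
begin

abbreviation "SS \<equiv> Iunit \<times> B"
abbreviation "tt \<equiv> tauS m0 m1 q al"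
abbreviation "Sg \<equiv> SigS V B"
abbreviation "RR \<equiv> Oiter (Oop SS tt Sg) (sim_e SS tt)"
abbreviation "XX a \<equiv> Iunit \<times> {z. z \<le> a}"

lemma al_lt: "e \<in> B \<Longrightarrow> e \<noteq> ozero \<Longrightarrow> al n e < e"
proof -
  assume e: "e \<in> B" "e \<noteq> ozero"
  show ?thesis
  proof (cases "\<exists>z. is_pred z e")
    case True then obtain z where "is_pred z e" by blast
    then show ?thesis using al_succ by (simp add: is_pred_def)
  next
    case False then have "is_limit e" using e by (simp add: is_limit_def)
    then show ?thesis using al_lim_bound e by blast
  qed
qed

lemma al_B: "e \<in> B \<Longrightarrow> al n e \<in> B"
  by (metis B_down al_lt al_zero order_less_imp_le)

lemma BV_sub: "BVsets V \<subseteq> Pow Iunit"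
proof
  fix x assume "x \<in> BVsets V"
  then show "x \<in> Pow Iunit" unfolding BVsets_def
    by (intro PowI sigma_sets_into_sp[of _ Iunit]) (use V_sub in \<open>auto simp: sets_restrict_space\<close>)
qed

lemma Iunit_BV: "Iunit \<in> BVsets V"
  unfolding BVsets_def by (rule sigma_sets_top)

lemma V_BV: "V \<in> BVsets V"
  unfolding BVsets_def by (rule sigma_sets.Basic) simp

lemma rect_Sig: "A \<in> BVsets V \<Longrightarrow> w \<in> B \<Longrightarrow> A \<times> {w} \<in> Sg"
  unfolding SigS_def
  apply (rule pair_measureI)
  using BV_sub by (auto simp: sets_measure_of intro: sigma_sets.Basic)

lemma Iunit_rs: "Iunit \<in> sets (restrict_space borel Iunit)"
  by (metis sets.top space_restrict_space2 sets_lborel Iunit_def open_greaterThanLessThan borel_open)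

lemma emI: "emeasure lborel Iunit = 1"
  unfolding Iunit_def by simp

lemma meas_I0: "measure m0 Iunit = 1"
  using m0_ext[OF Iunit_rs] emI by (simp add: measure_def)
lemma meas_I1: "measure m1 Iunit = 1"
  using m1_ext[OF Iunit_rs] emI by (simp add: measure_def)

lemma mV: "measure m0 V \<noteq> measure m1 V"
proof
  assume eq: "measure m0 V = measure m1 V"
  have "emeasure m0 V \<le> emeasure m0 Iunit"
    by (rule emeasure_mono) (use V_sub Iunit_BV m0_sets in auto)
  then have f0: "emeasure m0 V \<noteq> \<infinity>" using m0_ext[OF Iunit_rs] emI by (auto simp: top_unique)
  have "emeasure m1 V \<le> emeasure m1 Iunit"
    by (rule emeasure_mono) (use V_sub Iunit_BV m1_sets in auto)
  then have f1: "emeasure m1 V \<noteq> \<infinity>" using m1_ext[OF Iunit_rs] emI by (auto simp: top_unique)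
  have "emeasure m0 V = emeasure m1 V"
    using f0 f1 eq by (simp add: emeasure_eq_ennreal_measure)
  then show False using m01_V by simp
qed

lemma sect_rect: "sect (A \<times> {w}) g = (if g = w then A else {})"
  unfolding sect_def by auto

lemma sect_SS: "g \<in> B \<Longrightarrow> sect SS g = Iunit"
  unfolding sect_def by auto


lemma tau_zero: "tt n (x, ozero) E = x * measure m0 (sect E ozero)"
  by (simp add: tauS_def)

lemma tau_pos: "e \<noteq> ozero \<Longrightarrow> tt n (x, e) E = (if x < q n then measure m0 (sect E (al n e)) else measure m1 (sect E (al n e)))"
  by (simp add: tauS_def)

lemma rat_between: "(a::real) < b \<Longrightarrow> \<exists>r::rat. a < of_rat r \<and> of_rat r < b"
  by (metis Rats_cases Rats_dense_in_real)

lemma q_between: "x \<in> Iunit \<Longrightarrow> y \<in> Iunit \<Longrightarrow> x < y \<Longrightarrow> \<exists>n. x < q n \<and> q n < y"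
proof -
  assume xy: "x \<in> Iunit" "y \<in> Iunit" "x < y"
  obtain r :: rat where r: "x < of_rat r" "of_rat r < y" using rat_between[OF xy(3)] by blast
  have a: "0 < x" "y < 1" using xy by (auto simp: Iunit_def)
  have "(0::real) < of_rat r" "(of_rat r::real) < 1" using a r by linarith+
  then have "of_rat r \<in> \<rat> \<inter> Iunit" by (auto simp: Iunit_def)
  then have "of_rat r \<in> range q" using bij_betw_imp_surj_on[OF q_enum] by simp
  then show ?thesis using r by auto
qed

lemma ozero_B: "z \<in> B \<Longrightarrow> ozero \<in> B"
  using B_down ozero_le by blast

lemma closedE: assumes Qz: "\<forall>s\<in>XX z. \<forall>u. (s,u) \<in> RR z \<longrightarrow> u = s"
  and "E \<subseteq> XX z" "E \<in> Sg" shows "E \<in> SigR Sg (RR z)"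
  using assms unfolding SigR_def by blast

lemma sep:
  assumes Qz: "\<forall>s\<in>XX z. \<forall>u. (s,u) \<in> RR z \<longrightarrow> u = s" and zB: "z \<in> B"
    and rel: "((x,e),(y,f)) \<in> Oop SS tt Sg (RR z)"
    and cond: "((x,e) \<noteq> (y,f) \<and> (e = ozero \<or> f = ozero)) \<or>
      (e \<noteq> ozero \<and> f \<noteq> ozero \<and> al n e \<noteq> al n f \<and> al n e \<le> z) \<or>
      (e = f \<and> e \<noteq> ozero \<and> ((x < q n \<and> \<not> y < q n) \<or> (y < q n \<and> \<not> x < q n)) \<and> al n e \<le> z)"
  shows False
proof -
  have sS: "x \<in> Iunit" "e \<in> B" and uS: "y \<in> Iunit" "f \<in> B"
    and eq: "\<And>m E. E \<in> SigR Sg (RR z) \<Longrightarrow> tt m (x,e) E = tt m (y,f) E"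
    using rel unfolding Oop_def RelT_def by auto
  have oB: "ozero \<in> B" using ozero_B[OF zB] .
  have x01: "0 < x" "x < 1" "0 < y" "y < 1" using sS uS by (auto simp: Iunit_def)
  consider "(x,e) \<noteq> (y,f) \<and> (e = ozero \<or> f = ozero)"
    | "e \<noteq> ozero \<and> f \<noteq> ozero \<and> al n e \<noteq> al n f \<and> al n e \<le> z"
    | "e = f \<and> e \<noteq> ozero \<and> ((x < q n \<and> \<not> y < q n) \<or> (y < q n \<and> \<not> x < q n)) \<and> al n e \<le> z"
    using cond by blast
  then show False
  proof cases
    case 1
    define E where "E = Iunit \<times> {ozero::'o}"
    have "E \<in> SigR Sg (RR z)"
      by (rule closedE[OF Qz]) (auto simp: E_def ozero_le intro!: rect_Sig Iunit_BV oB)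
    then have teq: "tt 0 (x,e) E = tt 0 (y,f) E" by (rule eq)
    have te: "tt 0 (x,e) E = (if e = ozero then x else if al 0 e = ozero then 1 else 0)"
      by (cases "e = ozero") (auto simp: tau_zero tau_pos E_def sect_rect meas_I0 meas_I1)
    have tf: "tt 0 (y,f) E = (if f = ozero then y else if al 0 f = ozero then 1 else 0)"
      by (cases "f = ozero") (auto simp: tau_zero tau_pos E_def sect_rect meas_I0 meas_I1)
    from teq 1 x01 show False unfolding te tf by (auto split: if_splits)
  next
    case 2
    define E where "E = Iunit \<times> {al n e}"
    have "E \<in> SigR Sg (RR z)"
      by (rule closedE[OF Qz]) (use 2 in \<open>auto simp: E_def intro!: rect_Sig Iunit_BV al_B sS\<close>)
    then have "tt n (x,e) E = tt n (y,f) E" by (rule eq)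
    with 2 show False
      by (auto simp: tau_pos E_def sect_rect meas_I0 meas_I1 split: if_splits)
  next
    case 3
    define E where "E = V \<times> {al n e}"
    have "E \<in> SigR Sg (RR z)"
      by (rule closedE[OF Qz]) (use 3 V_sub in \<open>auto simp: E_def intro!: rect_Sig V_BV al_B sS uS\<close>)
    then have "tt n (x,e) E = tt n (y,f) E" by (rule eq)
    with 3 mV show False
      by (auto simp: tau_pos E_def sect_rect split: if_splits)
  qed
qed


lemma RR_sym: "(s,u) \<in> RR a \<Longrightarrow> (u,s) \<in> RR a"
proof (induction a arbitrary: s u rule: less_induct)
  case (less a)
  show ?case
  proof (cases "a = ozero")
    case True then show ?thesis using less.prems
      by (subst Oiter_unfold) (subst (asm) Oiter_unfold, auto simp: sim_e_def RelG_def)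
  next
    case F: False
    show ?thesis
    proof (cases "\<exists>z. is_pred z a")
      case True then show ?thesis using less.prems F
        by (subst Oiter_unfold) (subst (asm) Oiter_unfold, auto simp: Oop_def RelT_def)
    next
      case False
      have "\<forall>z<a. (s,u) \<in> RR z" using less.prems F False by (subst (asm) Oiter_unfold) auto
      then have "\<forall>z<a. (u,s) \<in> RR z" using less.IH by blast
      then show ?thesis using F False by (subst Oiter_unfold) auto
    qed
  qed
qed

lemma RR_refl: "s \<in> SS \<Longrightarrow> (s,s) \<in> RR a"
proof (induction a rule: less_induct)
  case (less a)
  show ?case
  proof (cases "a = ozero")
    case True then show ?thesis using less.prems
      by (subst Oiter_unfold) (auto simp: sim_e_def RelG_def)
  next
    case F: False
    show ?thesis
    proof (cases "\<exists>z. is_pred z a")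
      case True then show ?thesis using less.prems F
        by (subst Oiter_unfold) (auto simp: Oop_def RelT_def)
    next
      case False
      then show ?thesis using F less by (subst Oiter_unfold) auto
    qed
  qed
qed

lemma RR0_SS: "(s,u) \<in> RR ozero \<Longrightarrow> s \<in> SS \<and> u \<in> SS"
  by (subst (asm) Oiter_unfold) (auto simp: sim_e_def RelG_def)

lemma succ_ex: assumes "w < a" "a \<noteq> ozero" "\<not> (\<exists>z. is_pred z a)"
  shows "\<exists>v. is_pred w v \<and> v < a"
proof -
  define v where "v = (LEAST y. w < y)"
  have wv: "w < v" unfolding v_def using assms(1) by (rule LeastI)
  have va: "v \<le> a" unfolding v_def using assms(1) by (rule Least_le)
  have pv: "is_pred w v" unfolding is_pred_def using wv
    by (metis v_def not_less_Least)
  then have "v \<noteq> a" using assms(3) by blast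
  with pv va show ?thesis by auto
qed

lemma diff_al: assumes "e \<in> B" "f \<in> B" "e \<noteq> ozero" "f \<noteq> ozero" "e \<noteq> f"
  shows "\<exists>n. al n e \<noteq> al n f"
proof (rule ccontr)
  assume "\<not> ?thesis"
  then have eq: "\<And>n. al n e = al n f" by blast
  have nc: "\<And>g. g \<in> B \<Longrightarrow> is_limit g \<Longrightarrow> al 0 g \<noteq> al 1 g"
    using al_lim_mono by (metis strict_mono_def less_numeral_extra(1) order_less_irrefl)
  consider "\<exists>z. is_pred z e" "\<exists>z. is_pred z f" | "\<exists>z. is_pred z e" "is_limit f"
    | "is_limit e" "\<exists>z. is_pred z f" | "is_limit e" "is_limit f"
    using assms unfolding is_limit_def by blast
  then show False
  proof cases
    case 1
    then obtain z z' where z: "is_pred z e" "is_pred z' f" by blast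
    then have "z = z'" using eq[of 0] al_succ by metis
    then show False using z assms(5) unfolding is_pred_def by (metis linorder_neqE)
  next
    case 2
    then obtain z where "is_pred z e" by blast
    then show False using eq nc[OF assms(2) 2(2)] al_succ by metis
  next
    case 3
    then obtain z where "is_pred z f" by blast
    then show False using eq nc[OF assms(1) 3(1)] al_succ by metis
  next
    case 4
    show False
    proof (cases "e < f")
      case True
      then obtain n where "e < al n f" using al_lim_cofinal[OF assms(2) 4(2)] by blast
      then show False using eq[of n] al_lim_bound[OF assms(1) 4(1), of n] by (metis order.asym)
    next
      case False
      then have "f < e" using assms(5) by simp
      then obtain n where "f < al n e" using al_lim_cofinal[OF assms(1) 4(1)] by blast
      then show False using eq[of n] al_lim_bound[OF assms(2) 4(2), of n] by (metis order.asym)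
    qed
  qed
qed


lemma base:
  assumes xI: "x \<in> Iunit" and rel: "((x,ozero),(y,f)) \<in> sim_e SS tt"
  shows "(y,f) = (x,ozero)"
proof (rule ccontr)
  assume ne: "(y,f) \<noteq> (x,ozero)"
  let ?G = "sigma_sets SS {sem tt SS p | p. wf_form p}"
  have yI: "y \<in> Iunit" and fB: "f \<in> B" and oB: "ozero \<in> B"
    and iff: "\<And>A. A \<in> ?G \<Longrightarrow> (x,ozero) \<in> A \<longleftrightarrow> (y,f) \<in> A"
    using rel unfolding sim_e_def RelG_def by auto
  define A where "A r = sem tt SS (FDiam 0 r FTop)" for r
  have AG: "0 \<le> r \<Longrightarrow> r \<le> 1 \<Longrightarrow> A r \<in> ?G" for r
    unfolding A_def by (rule sigma_sets.Basic) (rule CollectI, rule exI[of _ "FDiam 0 r FTop"], simp)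
  have memA: "w \<in> A r \<longleftrightarrow> w \<in> SS \<and> tt 0 w SS > of_rat r" for w r
    unfolding A_def by simp
  define tu where "tu = (if f = ozero then y else 1)"
  have ts: "tt 0 (x,ozero) SS = x" using sect_SS[OF oB] meas_I0 by (simp add: tau_zero)
  have tuu: "tt 0 (y,f) SS = tu"
    using sect_SS[OF al_B[OF fB]] meas_I0 meas_I1 sect_SS[OF oB] by (auto simp: tu_def tau_zero tau_pos)
  have x01: "0 < x" "x < 1" "0 < y" "y < 1" using xI yI by (auto simp: Iunit_def)
  have tun: "tu \<noteq> x" "0 < tu" "tu \<le> 1" using ne x01 by (auto simp: tu_def)
  have sS: "(x,ozero) \<in> SS" "(y,f) \<in> SS" using xI yI oB fB by auto
  show False
  proof (cases "x < tu")
    case True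
    then obtain r where r: "x < of_rat r" "of_rat r < tu" using rat_between by blast
    have "(0::real) \<le> of_rat r" "(of_rat r::real) \<le> 1" using r x01 tun by linarith+
    then have "0 \<le> r" "r \<le> 1" by simp_all
    then have "(x,ozero) \<in> A r \<longleftrightarrow> (y,f) \<in> A r" using iff AG by blast
    then show False using r sS unfolding memA ts tuu by auto
  next
    case False
    then have "tu < x" using tun by simp
    then obtain r where r: "tu < of_rat r" "of_rat r < x" using rat_between by blast
    have "(0::real) \<le> of_rat r" "(of_rat r::real) \<le> 1" using r x01 tun by linarith+
    then have "0 \<le> r" "r \<le> 1" by simp_all
    then have "(x,ozero) \<in> A r \<longleftrightarrow> (y,f) \<in> A r" using iff AG by blast
    then show False using r sS unfolding memA ts tuu by auto
  qed
qed


lemma Oop_SS: "(s,u) \<in> Oop SS tt Sg R \<Longrightarrow> s \<in> SS \<and> u \<in> SS"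
  unfolding Oop_def RelT_def by auto

lemma pick_n:
  assumes "e \<in> B" "f \<in> B" "e \<noteq> ozero" "f \<noteq> ozero" "(x,e) \<noteq> (y,f)" "x \<in> Iunit" "y \<in> Iunit"
  shows "\<exists>n. (al n e \<noteq> al n f) \<or>
      (e = f \<and> ((x < q n \<and> \<not> y < q n) \<or> (y < q n \<and> \<not> x < q n)))"
proof (cases "e = f")
  case False
  obtain n where "al n e \<noteq> al n f" using diff_al[OF assms(1-4) False] by blast
  then show ?thesis by blast
next
  case True
  then have "x \<noteq> y" using assms(5) by simp
  then consider "x < y" | "y < x" by linarith
  then show ?thesis
  proof cases
    case 1
    obtain n where "x < q n" "q n < y" using q_between[OF assms(6,7) 1] by blast
    then have "(x < q n \<and> \<not> y < q n) \<or> (y < q n \<and> \<not> x < q n)" by simp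
    then show ?thesis using True by blast
  next
    case 2
    obtain n where "y < q n" "q n < x" using q_between[OF assms(7,6) 2] by blast
    then have "(x < q n \<and> \<not> y < q n) \<or> (y < q n \<and> \<not> x < q n)" by simp
    then show ?thesis using True by blast
  qed
qed

lemma Qmain: "a \<in> B \<Longrightarrow> \<forall>s\<in>XX a. \<forall>u. (s,u) \<in> RR a \<longrightarrow> u = s"
proof (induction a rule: less_induct)
  case (less a)
  have IH: "\<And>z. z < a \<Longrightarrow> \<forall>s\<in>XX z. \<forall>u. (s,u) \<in> RR z \<longrightarrow> u = s"
    using less B_down by (meson order_less_imp_le)
  have aB: "a \<in> B" by fact
  have oB: "ozero \<in> B" using ozero_B[OF aB] .
  show ?case
  proof (intro ballI allI impI)
    fix s u assume sX: "s \<in> XX a" and rel: "(s,u) \<in> RR a"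
    obtain x e where s: "s = (x,e)" and xI: "x \<in> Iunit" and ea: "e \<le> a" using sX by auto
    have eB: "e \<in> B" using B_down[OF aB ea] .
    show "u = s"
    proof (cases "a = ozero")
      case True
      then have e0: "e = ozero" using ea ozero_le by (metis antisym)
      have "(s,u) \<in> sim_e SS tt" using rel True by (subst (asm) Oiter_unfold) simp
      then show ?thesis using base[OF xI] unfolding s e0 by (metis surj_pair)
    next
      case F: False
      show ?thesis
      proof (cases "\<exists>z. is_pred z a")
        case True
        then obtain z where z: "is_pred z a" by blast
        have za: "z < a" using z by (simp add: is_pred_def)
        have zB: "z \<in> B" using B_down[OF aB] za by simp
        have rel': "(s,u) \<in> Oop SS tt Sg (RR z)"
          using rel F True the_pred[OF z] by (subst (asm) Oiter_unfold) simp
        obtain y f where u: "u = (y,f)" by (metis surj_pair)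
        have yI: "y \<in> Iunit" and fB: "f \<in> B" using Oop_SS[OF rel'] u by auto
        show ?thesis
        proof (rule ccontr)
          assume ne: "u \<noteq> s"
          have lez: "\<And>n. e \<noteq> ozero \<Longrightarrow> al n e \<le> z"
            using al_lt[OF eB] ea pred_le[OF z] by (meson order_less_le_trans)
          show False
          proof (cases "e = ozero \<or> f = ozero")
            case True
            have c: "(x,e) \<noteq> (y,f) \<and> (e = ozero \<or> f = ozero)" using True ne s u by (simp add: eq_commute)
            show False by (rule sep[OF IH[OF za] zB rel'[unfolded s u], of 0]) (use c in blast)
          next
            case False
            then obtain n where n: "(al n e \<noteq> al n f) \<or>
               (e = f \<and> ((x < q n \<and> \<not> y < q n) \<or> (y < q n \<and> \<not> x < q n)))"
              using pick_n[OF eB fB _ _ _ xI yI] ne s u False by blast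
            have c: "e \<noteq> ozero \<and> f \<noteq> ozero \<and> al n e \<le> z" using False lez by simp
            show False by (rule sep[OF IH[OF za] zB rel'[unfolded s u], of n]) (use c n in blast)
          qed
        qed
      next
        case NP: False
        have relz: "\<And>z. z < a \<Longrightarrow> (s,u) \<in> RR z"
          using rel F NP by (subst (asm) Oiter_unfold) auto
        show ?thesis
        proof (cases "e < a")
          case True
          moreover have "s \<in> XX e" using s xI by simp
          ultimately show ?thesis using IH[OF True] relz[OF True] by blast
        next
          case False
          then have ea': "e = a" using ea by simp
          have "ozero < a" using F ozero_le by (metis order.not_eq_order_implies_strict)
          then have "u \<in> SS" using RR0_SS relz by blast
          then obtain y f where u: "u = (y,f)" and yI: "y \<in> Iunit" and fB: "f \<in> B" by auto
          show ?thesis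
          proof (cases "f < a")
            case True
            have "(u,s) \<in> RR f" using RR_sym relz[OF True] .
            moreover have "u \<in> XX f" using u yI by simp
            ultimately show ?thesis using IH[OF True] by metis
          next
            case False
            then have fne: "f \<noteq> ozero" using F ozero_le by (metis order.antisym not_less)
            show ?thesis
            proof (rule ccontr)
              assume ne: "u \<noteq> s"
              obtain n where n: "(al n e \<noteq> al n f) \<or>
                 (e = f \<and> ((x < q n \<and> \<not> y < q n) \<or> (y < q n \<and> \<not> x < q n)))"
                using pick_n[OF eB fB _ fne _ xI yI] ne s u F ea' by blast
              define w where "w = al n e"
              have wa: "w < a" unfolding w_def using al_lt[OF eB] F ea' by simp
              have wB: "w \<in> B" unfolding w_def using al_B[OF eB] .
              obtain v where v: "is_pred w v" "v < a" using succ_ex[OF wa F NP] by blast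
              have v0: "v \<noteq> ozero" using v(1) ozero_le[of w] unfolding is_pred_def
                by (metis leD)
              have ex: "\<exists>z. is_pred z v" using v(1) by blast
              have RRv: "RR v = Oop SS tt Sg (RR w)"
                by (subst Oiter_unfold) (simp only: v0 ex the_pred[OF v(1)] if_False if_True simp_thms)
              have rel': "(s,u) \<in> Oop SS tt Sg (RR w)"
                using relz[OF v(2)] RRv by simp
              have c: "e \<noteq> ozero \<and> f \<noteq> ozero \<and> al n e \<le> w" using fne F ea' w_def by simp
              show False by (rule sep[OF IH[OF wa] wB rel'[unfolded s u], of n])
                (use n c in blast)
            qed
          qed
        qed
      qed
    qed
  qed
qed


lemma main: "\<forall>a\<in>B.
     (let S = Iunit \<times> B; t = tauS m0 m1 q al; Sig = SigS V B;
          R = Oiter (Oop S t Sig) (sim_e S t) a;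
          X = Iunit \<times> {z. z \<le> a}
      in R \<inter> (X \<times> X) = Id_on X \<and> V \<times> {a} \<in> SigR Sig R)"
proof
  fix a assume aB: "a \<in> B"
  have Q: "\<forall>s\<in>XX a. \<forall>u. (s,u) \<in> RR a \<longrightarrow> u = s" using Qmain[OF aB] .
  have XS: "XX a \<subseteq> SS" using B_down[OF aB] by auto
  have 1: "RR a \<inter> (XX a \<times> XX a) = Id_on (XX a)"
  proof
    show "RR a \<inter> (XX a \<times> XX a) \<subseteq> Id_on (XX a)" using Q by (auto simp: Id_on_def)
    show "Id_on (XX a) \<subseteq> RR a \<inter> (XX a \<times> XX a)" using XS by (auto simp: Id_on_def intro!: RR_refl)
  qed
  have 2: "V \<times> {a} \<in> SigR Sg (RR a)"
    by (rule closedE[OF Q]) (use V_sub in \<open>auto intro!: rect_Sig V_BV aB\<close>)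
  show "let S = Iunit \<times> B; t = tauS m0 m1 q al; Sig = SigS V B;
          R = Oiter (Oop S t Sig) (sim_e S t) a;
          X = Iunit \<times> {z. z \<le> a}
      in R \<inter> (X \<times> X) = Id_on X \<and> V \<times> {a} \<in> SigR Sig R"
    unfolding Let_def using 1 2 by simp
qed

end

theorem lemma5p8:
  fixes B :: "'o::wellorder set"
    and V :: "real set"
    and m0 m1 :: "real measure"
    and q :: "nat \<Rightarrow> real"
    and al :: "nat \<Rightarrow> 'o \<Rightarrow> 'o"
  assumes B_down: "\<And>x y. x \<in> B \<Longrightarrow> y \<le> x \<Longrightarrow> y \<in> B"
    and B_le_omega1: "\<And>x. x \<in> B \<Longrightarrow> countable {y. y < x}"
    and V_sub: "V \<subseteq> Iunit"
    and V_nonmeas: "V \<notin> sets lebesgue"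
    and m0_space: "space m0 = Iunit" and m0_sets: "sets m0 = BVsets V"
    and m1_space: "space m1 = Iunit" and m1_sets: "sets m1 = BVsets V"
    and m0_ext: "\<And>A. A \<in> sets (restrict_space borel Iunit) \<Longrightarrow> emeasure m0 A = emeasure lborel A"
    and m1_ext: "\<And>A. A \<in> sets (restrict_space borel Iunit) \<Longrightarrow> emeasure m1 A = emeasure lborel A"
    and m01_V: "emeasure m0 V \<noteq> emeasure m1 V"
    and q_enum: "bij_betw q UNIV (\<rat> \<inter> Iunit)"
    and al_zero: "\<And>n. al n ozero = ozero"
    and al_succ: "\<And>n z e. is_pred z e \<Longrightarrow> al n e = z"
    and al_lim_mono: "\<And>l. l \<in> B \<Longrightarrow> is_limit l \<Longrightarrow> strict_mono (\<lambda>n. al n l)"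
    and al_lim_bound: "\<And>l n. l \<in> B \<Longrightarrow> is_limit l \<Longrightarrow> ozero < al n l \<and> al n l < l"
    and al_lim_cofinal: "\<And>l z. l \<in> B \<Longrightarrow> is_limit l \<Longrightarrow> z < l \<Longrightarrow> \<exists>n. z < al n l"
  shows "\<forall>a\<in>B.
     (let S = Iunit \<times> B; t = tauS m0 m1 q al; Sig = SigS V B;
          R = Oiter (Oop S t Sig) (sim_e S t) a;
          X = Iunit \<times> {z. z \<le> a}
      in R \<inter> (X \<times> X) = Id_on X \<and> V \<times> {a} \<in> SigR Sig R)"
proof -
  interpret ctx B V m0 m1 q al
    by (unfold_locales; fact assms)
  show ?thesis by (rule main)
qed

end
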